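(* Let $\Bbbk$ be a field, $S=\Bbbk[x_1,\dots,x_n]$, $\mathbf{a}\in\mathbb{N}^n$ with all $a_k\ge1$, and $I\subset S$ a monomial ideal all of whose minimal generators $x^{\mathbf{c}}$ satisfy $\mathbf{c}\preceq\mathbf{a}$. For every $i\in[n]$ and every integer $j$ with $1\le j\le a_i+1$, the squarefree monomial ideals $\mathrm{BM}_{\mathbf{a}+\mathbf{e}_i}(I^{\triangleleft\langle i,j\rangle})$ and $\mathrm{Infl}_{(i,j)}(\mathrm{BM}_{\mathbf{a}}(I))$ (each in a polynomial ring with $|\mathbf{a}|+n+1$ variables) coincide after a suitable bijective identification of the variables of the two polynomial rings.
   Context: $\preceq$ is the componentwise order, $|\mathbf{a}|=\sum_k a_k$, $x^{\mathbf{b}}=\prod_k x_k^{b_k}$, $\mathbf{e}_i$ the $i$-th unit vector. For $m\in\mathbb{Z}$, $\tau_{\langle i,m\rangle}$ fixes coordinates $k\neq i$ and sends $b_i$ to $b_i+1$ if $b_i\ge m$, to $b_i$ otherwise. For $j\ge1$ and $I=(x^{\mathbf{c}_1},\dots,x^{\mathbf{c}_r})$, $I^{\triangleleft\langle i,j\rangle}:=(x^{\tau_{\langle i,j\rangle}(\mathbf{c}_1)},\dots,x^{\tau_{\langle i,j\rangle}(\mathbf{c}_r)})$ (its generators have exponents $\preceq\mathbf{a}+\mathbf{e}_i$). Alexander dual: $I^{\vee\mathbf{a}}=(x^{\mathbf{b}}\mid\mathbf{b}\in\mathbb{N}^n,\ \mathbf{b}\preceq\mathbf{a},\ x^{\mathbf{a}-\mathbf{b}}\notin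 I)$. Let $\tilde S=\Bbbk[x_{k,m}\mid 1\le k\le n,\ 1\le m\le a_k+1]$. For a monomial ideal $J$ of $S$ with generators $x^{\mathbf{b}}$, $\mathbf{b}\preceq\mathbf{a}$, let $\mathrm{pol}_{\mathbf{a}+\mathbf{1}}(J)$ be the ideal of $\tilde S$ generated by $\prod_k x_{k,1}x_{k,2}\cdots x_{k,b_k}$ and $\mathrm{pol}^{\mathbf{a}+\mathbf{1}}(J)$ the ideal generated by $\prod_k x_{k,a_k+1}x_{k,a_k}\cdots x_{k,a_k-b_k+2}$, over the minimal generators $x^{\mathbf{b}}$ of $J$. The Bier–Murai ideal is $$\mathrm{BM}_{\mathbf{a}}(I)=\mathrm{pol}_{\mathbf{a}+\mathbf{1}}(I)+\mathrm{pol}^{\mathbf{a}+\mathbf{1}}(I^{\vee\mathbf{a}})+\Big(\prod_{m=1}^{a_l+1}x_{l,m}\ \Big|\ l=1,\dots,n\Big)\subset\tilde S.$$ For a squarefree monomial ideal $J$ of a polynomial ring $T$ and a variable $y$ of $T$, the inflation $\mathrm{Infl}_y(J)\subset T[y']$ ($y'$ a new variable) is the ideal obtained by replacing $y$ by $y\cdot y'$ in each minimal generator of $J$; $\mathrm{Infl}_{(i,j)}$ denotes inflation at $x_{i,j}$. *)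

theory Defs
  imports Main
begin

text \<open>Monomials in a polynomial ring with variable set V (variables of type 'v) are
  represented by their exponent vectors m :: 'v => nat with support in V.
  A monomial ideal is represented by the set of (exponent vectors of) monomials it contains.
  The coefficient field plays no role for monomial ideals.\<close>

definition monoms :: "'v set \<Rightarrow> ('v \<Rightarrow> nat) set" where
  "monoms V = {m. \<forall>v. v \<notin> V \<longrightarrow> m v = 0}"

definition monomial_ideal :: "'v set \<Rightarrow> ('v \<Rightarrow> nat) set \<Rightarrow> bool" where
  "monomial_ideal V J \<longleftrightarrow> J \<subseteq> monoms V \<and> (\<forall>m\<in>J. \<forall>m'\<in>monoms V. m \<le> m' \<longrightarrow> m' \<in> J)"

definition ideal_gen :: "'v set \<Rightarrow> ('v \<Rightarrow> nat) set \<Rightarrow> ('v \<Rightarrow> nat) set" where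
  "ideal_gen V G = {m \<in> monoms V. \<exists>g\<in>G. g \<le> m}"

definition mingens :: "('v \<Rightarrow> nat) set \<Rightarrow> ('v \<Rightarrow> nat) set" where
  "mingens J = {m \<in> J. \<forall>m'\<in>J. m' \<le> m \<longrightarrow> m' = m}"

definition sqmon :: "'v set \<Rightarrow> 'v \<Rightarrow> nat" where
  "sqmon A = (\<lambda>v. if v \<in> A then 1 else 0)"

text \<open>Variables x_1..x_n of S are indexed 0..n-1; a :: nat => nat with a k = 0 for k >= n.\<close>

definition tau :: "nat \<Rightarrow> nat \<Rightarrow> (nat \<Rightarrow> nat) \<Rightarrow> (nat \<Rightarrow> nat)" where
  "tau i m b = b(i := (if b i \<ge> m then b i + 1 else b i))"

definition triangle :: "nat \<Rightarrow> nat \<Rightarrow> nat \<Rightarrow> (nat \<Rightarrow> nat) set \<Rightarrow> (nat \<Rightarrow> nat) set" where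
  "triangle n i j I = ideal_gen {..<n} (tau i j ` mingens I)"

definition alex_dual :: "nat \<Rightarrow> (nat \<Rightarrow> nat) \<Rightarrow> (nat \<Rightarrow> nat) set \<Rightarrow> (nat \<Rightarrow> nat) set" where
  "alex_dual n a I = ideal_gen {..<n} {b \<in> monoms {..<n}. b \<le> a \<and> (a - b) \<notin> I}"

definition bmvars :: "nat \<Rightarrow> (nat \<Rightarrow> nat) \<Rightarrow> (nat \<times> nat) set" where
  "bmvars n a = {(k, m). k < n \<and> 1 \<le> m \<and> m \<le> a k + 1}"

definition BM :: "nat \<Rightarrow> (nat \<Rightarrow> nat) \<Rightarrow> (nat \<Rightarrow> nat) set \<Rightarrow> ((nat \<times> nat) \<Rightarrow> nat) set" where
  "BM n a I = ideal_gen (bmvars n a)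
     ({sqmon {(k, m). k < n \<and> 1 \<le> m \<and> m \<le> b k} | b. b \<in> mingens I}
      \<union> {sqmon {(k, m). k < n \<and> a k + 2 \<le> m + b k \<and> m \<le> a k + 1} | b. b \<in> mingens (alex_dual n a I)}
      \<union> {sqmon {(l, m). l = l0 \<and> 1 \<le> m \<and> m \<le> a l0 + 1} | l0. l0 < n})"

text \<open>Inflation at variable y: the new variable y' is None, old variables are Some v.
  Each minimal generator g becomes g with y replaced by y*y'.\<close>
definition Infl :: "'v set \<Rightarrow> 'v \<Rightarrow> ('v \<Rightarrow> nat) set \<Rightarrow> ('v option \<Rightarrow> nat) set" where
  "Infl V y J = ideal_gen (Some ` V \<union> {None})
     ((\<lambda>g. (\<lambda>u. case u of None \<Rightarrow> g y | Some v \<Rightarrow> g v)) ` mingens J)"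

definition rename :: "('v \<Rightarrow> 'w) \<Rightarrow> 'v set \<Rightarrow> 'w set \<Rightarrow> ('v \<Rightarrow> nat) set \<Rightarrow> ('w \<Rightarrow> nat) set" where
  "rename \<sigma> V1 V2 J = {m \<in> monoms V2. (\<lambda>v. if v \<in> V1 then m (\<sigma> v) else 0) \<in> J}"

end

theory Submission
  imports Defs
begin


lemma mingens_below:
  assumes "finite V" "J \<subseteq> monoms V" "m \<in> J"
  shows "\<exists>g\<in>mingens J. g \<le> m"
  using assms(3)
proof (induction "sum m V" arbitrary: m rule: less_induct)
  case less
  show ?case
  proof (cases "m \<in> mingens J")
    case True then show ?thesis by auto
  next
    case False
    then obtain m' where m': "m' \<in> J" "m' \<le> m" "m' \<noteq> m"
      using less.prems unfolding mingens_def by auto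
    then obtain v where v: "m' v \<noteq> m v" by auto
    have "v \<in> V"
    proof (rule ccontr)
      assume "v \<notin> V"
      then have "m' v = 0" "m v = 0" using assms(2) m'(1) less.prems unfolding monoms_def by auto
      then show False using v by simp
    qed
    moreover have "m' v < m v" using v m'(2) by (simp add: le_fun_def order_less_le)
    ultimately have "sum m' V < sum m V"
      using m'(2) assms(1) by (intro sum_strict_mono_ex1) (auto simp: le_fun_def)
    then obtain g where "g \<in> mingens J" "g \<le> m'" using less.hyps m'(1) by blast
    then show ?thesis using m'(2) by (auto intro: order_trans)
  qed
qed

lemma monomial_ideal_gen: "monomial_ideal V (ideal_gen V G)"
  unfolding monomial_ideal_def ideal_gen_def by (auto intro: order_trans)

lemma mingens_sub: "mingens J \<subseteq> J" unfolding mingens_def by auto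

lemma ideal_gen_mingens_mem:
  assumes "finite V" "monomial_ideal V J" "w \<in> monoms V"
  shows "(\<exists>c\<in>mingens J. c \<le> w) \<longleftrightarrow> w \<in> J"
proof
  assume "\<exists>c\<in>mingens J. c \<le> w"
  then obtain c where "c \<in> J" "c \<le> w" using mingens_sub by blast
  then show "w \<in> J" using assms unfolding monomial_ideal_def by blast
next
  assume "w \<in> J"
  then show "\<exists>c\<in>mingens J. c \<le> w"
    using mingens_below[OF assms(1) _ \<open>w \<in> J\<close>] assms(2) unfolding monomial_ideal_def by blast
qed

lemma mingens_gen_sub:
  assumes "G \<subseteq> monoms V"
  shows "mingens (ideal_gen V G) \<subseteq> G"
proof
  fix x assume x: "x \<in> mingens (ideal_gen V G)"
  then obtain g where g: "g \<in> G" "g \<le> x" unfolding mingens_def ideal_gen_def by auto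
  then have "g \<in> ideal_gen V G" using assms unfolding ideal_gen_def by auto
  then have "g = x" using x g unfolding mingens_def by auto
  then show "x \<in> G" using g by simp
qed

lemma mingens_embed:
  assumes emb: "\<And>x y. f x \<le> f y \<longleftrightarrow> x \<le> y"
    and sub: "f ` mingens J \<subseteq> monoms V"
  shows "mingens (ideal_gen V (f ` mingens J)) = f ` mingens J"
proof
  show "mingens (ideal_gen V (f ` mingens J)) \<subseteq> f ` mingens J"
    by (rule mingens_gen_sub[OF sub])
next
  show "f ` mingens J \<subseteq> mingens (ideal_gen V (f ` mingens J))"
  proof
    fix x assume "x \<in> f ` mingens J"
    then obtain c where c: "c \<in> mingens J" "x = f c" by auto
    have xin: "x \<in> ideal_gen V (f ` mingens J)" using c sub unfolding ideal_gen_def by auto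
    have "\<forall>m'\<in>ideal_gen V (f ` mingens J). m' \<le> x \<longrightarrow> m' = x"
    proof (intro ballI impI)
      fix m' assume m': "m' \<in> ideal_gen V (f ` mingens J)" "m' \<le> x"
      then obtain c' where c': "c' \<in> mingens J" "f c' \<le> m'" unfolding ideal_gen_def by auto
      then have "f c' \<le> f c" using m' c by (auto intro: order_trans)
      then have "c' \<le> c" using emb by simp
      then have "c' = c" using c' c unfolding mingens_def by auto
      then show "m' = x" using c c' m' by (auto intro: order_antisym)
    qed
    then show "x \<in> mingens (ideal_gen V (f ` mingens J))" using xin unfolding mingens_def by auto
  qed
qed

definition infl :: "'v \<Rightarrow> ('v \<Rightarrow> nat) \<Rightarrow> ('v option \<Rightarrow> nat)" where
  "infl y g = (\<lambda>u. case u of None \<Rightarrow> g y | Some v \<Rightarrow> g v)"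

lemma infl_mono: "g \<le> h \<Longrightarrow> infl y g \<le> infl y h"
  unfolding infl_def le_fun_def by (auto split: option.split)

lemma Infl_gen:
  assumes "finite V" "G \<subseteq> monoms V"
  shows "Infl V y (ideal_gen V G) = ideal_gen (Some ` V \<union> {None}) (infl y ` G)"
proof -
  have eq: "Infl V y (ideal_gen V G) = ideal_gen (Some ` V \<union> {None}) (infl y ` mingens (ideal_gen V G))"
    unfolding Infl_def infl_def[abs_def] by (rule refl)
  have sub: "mingens (ideal_gen V G) \<subseteq> G" by (rule mingens_gen_sub[OF assms(2)])
  have below: "\<forall>g\<in>G. \<exists>x\<in>mingens (ideal_gen V G). x \<le> g"
  proof
    fix g assume "g \<in> G"
    then have "g \<in> ideal_gen V G" using assms(2) unfolding ideal_gen_def by auto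
    then show "\<exists>x\<in>mingens (ideal_gen V G). x \<le> g"
      using mingens_below[OF assms(1), of "ideal_gen V G" g] by (auto simp: ideal_gen_def)
  qed
  have gen: "ideal_gen W (infl y ` M) = ideal_gen W (infl y ` G)"
    if "M \<subseteq> G" "\<forall>g\<in>G. \<exists>x\<in>M. x \<le> g" for M W
    unfolding ideal_gen_def using that by (auto intro: order_trans infl_mono) (meson infl_mono order_trans)
  have "ideal_gen (Some ` V \<union> {None}) (infl y ` mingens (ideal_gen V G)) = ideal_gen (Some ` V \<union> {None}) (infl y ` G)"
    using gen[OF sub below] .
  then show ?thesis using eq by simp
qed



definition rho :: "nat \<Rightarrow> nat \<Rightarrow> nat" where "rho m t = (if t < m then t else t - 1)"

lemma tau_le_iff: assumes "1 \<le> m" shows "tau i m c \<le> u \<longleftrightarrow> c \<le> u(i := rho m (u i))"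
proof -
  have "\<And>k. (tau i m c k \<le> u k) = (c k \<le> (u(i := rho m (u i))) k)"
    using assms by (auto simp: tau_def rho_def)
  then show ?thesis by (simp add: le_fun_def)
qed

lemma tau_emb: "tau i m x \<le> tau i m y \<longleftrightarrow> x \<le> y"
proof -
  have "\<And>k. (tau i m x k \<le> tau i m y k) = (x k \<le> y k)"
    by (auto simp: tau_def)
  then show ?thesis by (simp add: le_fun_def)
qed

lemma tau_monoms: "i < n \<Longrightarrow> x \<in> monoms {..<n} \<Longrightarrow> tau i m x \<in> monoms {..<n}"
  unfolding monoms_def tau_def by auto

lemma upd_monoms: "i < n \<Longrightarrow> x \<in> monoms {..<n} \<Longrightarrow> x(i := t) \<in> monoms {..<n}"
  unfolding monoms_def by auto

lemma mem_tau_gen: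
  assumes "i < n" "monomial_ideal {..<n} J" "1 \<le> m"
  shows "u \<in> ideal_gen {..<n} (tau i m ` mingens J) \<longleftrightarrow> u \<in> monoms {..<n} \<and> u(i := rho m (u i)) \<in> J"
proof -
  have "u \<in> ideal_gen {..<n} (tau i m ` mingens J) \<longleftrightarrow> u \<in> monoms {..<n} \<and> (\<exists>c\<in>mingens J. c \<le> u(i := rho m (u i)))"
    unfolding ideal_gen_def using assms(3) by (auto simp: tau_le_iff)
  also have "\<dots> \<longleftrightarrow> u \<in> monoms {..<n} \<and> u(i := rho m (u i)) \<in> J"
    using ideal_gen_mingens_mem[OF _ assms(2)] upd_monoms[OF assms(1)] by auto
  finally show ?thesis .
qed

lemma mem_alex:
  assumes "monomial_ideal {..<n} J" "a \<in> monoms {..<n}"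
  shows "u \<in> alex_dual n a J \<longleftrightarrow> u \<in> monoms {..<n} \<and> (\<lambda>k. a k - min (u k) (a k)) \<notin> J"
proof
  assume "u \<in> alex_dual n a J"
  then obtain b where b: "u \<in> monoms {..<n}" "b \<in> monoms {..<n}" "b \<le> a" "a - b \<notin> J" "b \<le> u"
    unfolding alex_dual_def ideal_gen_def by auto
  have "(\<lambda>k. a k - min (u k) (a k)) \<le> a - b" using b(3,5) by (auto simp: le_fun_def intro!: diff_le_mono2)
  moreover have "a - b \<in> monoms {..<n}" using assms(2) unfolding monoms_def by auto
  ultimately have "(\<lambda>k. a k - min (u k) (a k)) \<notin> J"
    using b(4) assms(1) unfolding monomial_ideal_def by blast
  then show "u \<in> monoms {..<n} \<and> (\<lambda>k. a k - min (u k) (a k)) \<notin> J" using b by simp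
next
  assume h: "u \<in> monoms {..<n} \<and> (\<lambda>k. a k - min (u k) (a k)) \<notin> J"
  define b where "b = (\<lambda>k. min (u k) (a k))"
  have "b \<in> monoms {..<n}" "b \<le> a" "b \<le> u" using h unfolding b_def monoms_def le_fun_def by auto
  moreover have "a - b = (\<lambda>k. a k - min (u k) (a k))" unfolding b_def by (simp add: fun_diff_def)
  ultimately show "u \<in> alex_dual n a J" using h unfolding alex_dual_def ideal_gen_def by auto
qed

lemma mingens_alex_le:
  "x \<in> mingens (alex_dual n a J) \<Longrightarrow> x \<le> a"
  unfolding alex_dual_def using mingens_gen_sub[of "{b \<in> monoms {..<n}. b \<le> a \<and> a - b \<notin> J}" "{..<n}"]
  by auto



lemma arith_key:
  assumes "1 \<le> j" "j \<le> A + 1"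
  shows "rho j (A + 1 - min t (A + 1)) = A - min (rho (A + 2 - j) t) A"
  using assms unfolding rho_def by auto

lemma dual_triangle:
  assumes "i < n" "1 \<le> j" "j \<le> a i + 1" "a \<in> monoms {..<n}" "monomial_ideal {..<n} I"
  shows "alex_dual n (a(i := a i + 1)) (triangle n i j I)
       = ideal_gen {..<n} (tau i (a i + 2 - j) ` mingens (alex_dual n a I))"
proof (rule set_eqI)
  fix u
  let ?a' = "a(i := a i + 1)"
  let ?m0 = "a i + 2 - j"
  define w' where "w' = (\<lambda>k. ?a' k - min (u k) (?a' k))"
  have a'm: "?a' \<in> monoms {..<n}" using assms(1,4) by (rule upd_monoms)
  have tri: "triangle n i j I = ideal_gen {..<n} (tau i j ` mingens I)" unfolding triangle_def ..
  have mi': "monomial_ideal {..<n} (triangle n i j I)" unfolding tri by (rule monomial_ideal_gen)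
  have miD: "monomial_ideal {..<n} (alex_dual n a I)" unfolding alex_dual_def by (rule monomial_ideal_gen)
  have w'm: "w' \<in> monoms {..<n}" using a'm unfolding w'_def monoms_def by auto
  have key: "w'(i := rho j (w' i)) = (\<lambda>k. a k - min ((u(i := rho ?m0 (u i))) k) (a k))"
  proof
    fix k show "(w'(i := rho j (w' i))) k = a k - min ((u(i := rho ?m0 (u i))) k) (a k)"
      using arith_key[OF assms(2,3), of "u i"] unfolding w'_def by (cases "k = i") auto
  qed
  have "u \<in> alex_dual n ?a' (triangle n i j I) \<longleftrightarrow> u \<in> monoms {..<n} \<and> w' \<notin> triangle n i j I"
    unfolding w'_def by (rule mem_alex[OF mi' a'm])
  also have "\<dots> \<longleftrightarrow> u \<in> monoms {..<n} \<and> w'(i := rho j (w' i)) \<notin> I"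
    unfolding tri using mem_tau_gen[OF assms(1,5,2)] w'm by auto
  also have "\<dots> \<longleftrightarrow> u \<in> monoms {..<n} \<and> u(i := rho ?m0 (u i)) \<in> alex_dual n a I"
    unfolding key using mem_alex[OF assms(5,4)] upd_monoms[OF assms(1)] by auto
  also have "\<dots> \<longleftrightarrow> u \<in> ideal_gen {..<n} (tau i ?m0 ` mingens (alex_dual n a I))"
    using mem_tau_gen[OF assms(1) miD, of ?m0] assms(3) by auto
  finally show "u \<in> alex_dual n ?a' (triangle n i j I) \<longleftrightarrow> u \<in> ideal_gen {..<n} (tau i ?m0 ` mingens (alex_dual n a I))" .
qed

lemma mingens_tau:
  assumes "i < n" "\<forall>c\<in>mingens J. c \<in> monoms {..<n}"
  shows "mingens (ideal_gen {..<n} (tau i m ` mingens J)) = tau i m ` mingens J"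
  using assms by (intro mingens_embed tau_emb) (auto intro: tau_monoms)



definition sig :: "nat \<Rightarrow> nat \<Rightarrow> nat \<times> nat \<Rightarrow> (nat \<times> nat) option" where
  "sig i j v = (if fst v = i \<and> snd v = Suc j then None
     else if fst v = i \<and> snd v > Suc j then Some (fst v, snd v - 1) else Some v)"

definition siginv :: "nat \<Rightarrow> nat \<Rightarrow> (nat \<times> nat) option \<Rightarrow> nat \<times> nat" where
  "siginv i j w = (case w of None \<Rightarrow> (i, Suc j)
     | Some v \<Rightarrow> if fst v = i \<and> snd v > j then (fst v, Suc (snd v)) else v)"

definition inA :: "nat \<Rightarrow> nat \<Rightarrow> (nat \<times> nat) set \<Rightarrow> (nat \<times> nat) option \<Rightarrow> bool" where
  "inA i j A w = (case w of None \<Rightarrow> (i, j) \<in> A | Some v \<Rightarrow> v \<in> A)"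

lemma sig_siginv: "sig i j (siginv i j w) = w"
  unfolding sig_def siginv_def by (auto split: option.split)

lemma siginv_sig: "siginv i j (sig i j v) = v"
  unfolding sig_def siginv_def by (cases v) auto

lemma sig_mem:
  assumes "i < n" "j \<le> a i + 1"
  shows "v \<in> bmvars n (a(i := a i + 1)) \<longleftrightarrow> sig i j v \<in> Some ` bmvars n a \<union> {None}"
  using assms unfolding sig_def bmvars_def by (cases v) (auto simp: image_iff)

lemma P_corr:
  assumes "1 \<le> j"
  shows "v \<in> {(k, m). k < n \<and> 1 \<le> m \<and> m \<le> tau i j c k}
     \<longleftrightarrow> inA i j {(k, m). k < n \<and> 1 \<le> m \<and> m \<le> c k} (sig i j v)"
  using assms unfolding sig_def inA_def tau_def by (cases v) auto

lemma Q_corr: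
  assumes "1 \<le> j" "j \<le> a i + 1"
  shows "v \<in> {(k, m). k < n \<and> (a(i := a i + 1)) k + 2 \<le> m + tau i (a i + 2 - j) b k \<and> m \<le> (a(i := a i + 1)) k + 1}
     \<longleftrightarrow> inA i j {(k, m). k < n \<and> a k + 2 \<le> m + b k \<and> m \<le> a k + 1} (sig i j v)"
  using assms unfolding sig_def inA_def tau_def by (cases v) auto

lemma R_corr:
  assumes "1 \<le> j" "j \<le> a i + 1"
  shows "v \<in> {(l, m). l = l0 \<and> 1 \<le> m \<and> m \<le> (a(i := a i + 1)) l0 + 1}
     \<longleftrightarrow> inA i j {(l, m). l = l0 \<and> 1 \<le> m \<and> m \<le> a l0 + 1} (sig i j v)"
  using assms unfolding sig_def inA_def by (cases v) auto

lemma infl_sqmon: "infl (i, j) (sqmon A) u = (if inA i j A u then 1 else 0)"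
  unfolding infl_def sqmon_def inA_def by (auto split: option.split)

lemma inA_V2: "A \<subseteq> bmvars n a \<Longrightarrow> inA i j A u \<Longrightarrow> u \<in> Some ` bmvars n a \<union> {None}"
  unfolding inA_def by (auto split: option.splits)

lemma gen_corr:
  assumes "i < n" "j \<le> a i + 1" "\<forall>v. v \<in> A' \<longleftrightarrow> inA i j A (sig i j v)" "A \<subseteq> bmvars n a"
  shows "sqmon A' \<le> (\<lambda>v. if v \<in> bmvars n (a(i:=a i+1)) then m (sig i j v) else 0) \<longleftrightarrow> infl (i,j) (sqmon A) \<le> m"
proof
  assume L: "sqmon A' \<le> (\<lambda>v. if v \<in> bmvars n (a(i:=a i+1)) then m (sig i j v) else 0)"
  show "infl (i,j) (sqmon A) \<le> m"
  proof (rule le_funI)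
    fix u
    show "infl (i,j) (sqmon A) u \<le> m u"
    proof (cases "inA i j A u")
      case True
      define v' where "v' = siginv i j u"
      have s: "sig i j v' = u" unfolding v'_def by (rule sig_siginv)
      have "v' \<in> A'" using assms(3) True s by metis
      moreover have "v' \<in> bmvars n (a(i:=a i+1))"
        using sig_mem[of i n j a, OF assms(1,2)] inA_V2[OF assms(4) True] s by simp
      ultimately have "1 \<le> m u" using L s unfolding le_fun_def sqmon_def
        by (metis (full_types))
      then show ?thesis using True infl_sqmon by simp
    next
      case False then show ?thesis using infl_sqmon by simp
    qed
  qed
next
  assume R: "infl (i,j) (sqmon A) \<le> m"
  show "sqmon A' \<le> (\<lambda>v. if v \<in> bmvars n (a(i:=a i+1)) then m (sig i j v) else 0)"
  proof (rule le_funI)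
    fix v'
    show "sqmon A' v' \<le> (if v' \<in> bmvars n (a(i:=a i+1)) then m (sig i j v') else 0)"
    proof (cases "v' \<in> A'")
      case True
      then have inA: "inA i j A (sig i j v')" using assms(3) by simp
      then have "v' \<in> bmvars n (a(i:=a i+1))"
        using sig_mem[of i n j a, OF assms(1,2)] inA_V2[OF assms(4)] by blast
      moreover have "1 \<le> m (sig i j v')" using R inA infl_sqmon unfolding le_fun_def
        by (metis (full_types))
      ultimately show ?thesis using True unfolding sqmon_def by simp
    next
      case False then show ?thesis unfolding sqmon_def by simp
    qed
  qed
qed



lemma bmvars_finite: "finite (bmvars n a)"
proof -
  have "bmvars n a = (SIGMA k:{..<n}. {1..a k+1})" unfolding bmvars_def by auto
  then show ?thesis by simp
qed

theorem proposition5p3: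
  fixes n :: nat and a :: "nat \<Rightarrow> nat" and I :: "(nat \<Rightarrow> nat) set" and i j :: nat
  assumes "\<forall>k<n. 1 \<le> a k"
    and "\<forall>k. n \<le> k \<longrightarrow> a k = 0"
    and "monomial_ideal {..<n} I"
    and "\<forall>c\<in>mingens I. c \<le> a"
    and "i < n" and "1 \<le> j" and "j \<le> a i + 1"
  shows "\<exists>\<sigma>. bij_betw \<sigma> (bmvars n (a(i := a i + 1))) (Some ` bmvars n a \<union> {None})
           \<and> rename \<sigma> (bmvars n (a(i := a i + 1))) (Some ` bmvars n a \<union> {None})
               (BM n (a(i := a i + 1)) (triangle n i j I))
             = Infl (bmvars n a) (i, j) (BM n a I)"
proof (intro exI conjI)
  let ?a' = "a(i := a i + 1)"
  let ?V = "bmvars n a" and ?V1 = "bmvars n ?a'" and ?V2 = "Some ` bmvars n a \<union> {None}"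
  let ?I' = "triangle n i j I"
  let ?D = "alex_dual n a I"
  let ?m0 = "a i + 2 - j"
  have smem: "\<And>v. v \<in> ?V1 \<longleftrightarrow> sig i j v \<in> ?V2" by (rule sig_mem[of i n j a, OF assms(5,7)])
  show "bij_betw (sig i j) ?V1 ?V2"
  proof (rule bij_betw_byWitness[where f' = "siginv i j"])
    show "\<forall>x\<in>?V1. siginv i j (sig i j x) = x" by (intro ballI) (rule siginv_sig)
    show "\<forall>y\<in>?V2. sig i j (siginv i j y) = y" by (intro ballI) (rule sig_siginv)
    show "sig i j ` ?V1 \<subseteq> ?V2"
    proof
      fix y assume "y \<in> sig i j ` ?V1"
      then obtain x where "x \<in> ?V1" "y = sig i j x" by blast
      then show "y \<in> ?V2" using smem[of x] by simp
    qed
    show "siginv i j ` ?V2 \<subseteq> ?V1"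
    proof
      fix x assume "x \<in> siginv i j ` ?V2"
      then obtain y where y: "y \<in> ?V2" "x = siginv i j y" by blast
      have "sig i j x = y" using y(2) sig_siginv by metis
      then show "x \<in> ?V1" using smem[of x] y(1) by simp
    qed
  qed
  have am: "a \<in> monoms {..<n}" using assms(2) unfolding monoms_def by auto
  have mI: "mingens I \<subseteq> monoms {..<n}" using assms(3) mingens_sub unfolding monomial_ideal_def by blast
  have mD: "mingens ?D \<subseteq> monoms {..<n}"
    using mingens_sub[of ?D] monomial_ideal_gen[of "{..<n}"] unfolding alex_dual_def monomial_ideal_def by blast
  have mgI': "mingens ?I' = tau i j ` mingens I"
    unfolding triangle_def using mingens_tau[OF assms(5)] mI by blast
  have mgD': "mingens (alex_dual n ?a' ?I') = tau i ?m0 ` mingens ?D"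
    unfolding dual_triangle[OF assms(5,6,7) am assms(3)] using mingens_tau[OF assms(5)] mD by blast
  define P where "P = (\<lambda>b::nat\<Rightarrow>nat. {(k, m). k < n \<and> 1 \<le> m \<and> m \<le> b k})"
  define Q where "Q = (\<lambda>(a::nat\<Rightarrow>nat) (b::nat\<Rightarrow>nat). {(k, m). k < n \<and> a k + 2 \<le> m + b k \<and> m \<le> a k + 1})"
  define R where "R = (\<lambda>(a::nat\<Rightarrow>nat) l0. {(l, m). l = l0 \<and> 1 \<le> m \<and> m \<le> a l0 + 1})"
  define G where "G = {sqmon (P b) | b. b \<in> mingens I} \<union> {sqmon (Q a b) | b. b \<in> mingens ?D}
      \<union> {sqmon (R a l0) | l0. l0 < n}"
  define G' where "G' = {sqmon (P b) | b. b \<in> mingens ?I'} \<union> {sqmon (Q ?a' b) | b. b \<in> mingens (alex_dual n ?a' ?I')}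
      \<union> {sqmon (R ?a' l0) | l0. l0 < n}"
  have BM: "BM n a I = ideal_gen ?V G" unfolding BM_def G_def P_def Q_def R_def ..
  have BM': "BM n ?a' ?I' = ideal_gen ?V1 G'" unfolding BM_def G'_def P_def Q_def R_def ..
  have sqm: "sqmon A \<in> monoms V \<longleftrightarrow> A \<subseteq> V" for A :: "(nat \<times> nat) set" and V
    unfolding sqmon_def monoms_def by auto
  have PV: "P c \<subseteq> ?V" if "c \<in> mingens I" for c
  proof -
    have "c \<le> a" using assms(4) that by blast
    show ?thesis unfolding P_def bmvars_def
    proof (rule subsetI)
      fix x assume x: "x \<in> {(k, m). k < n \<and> 1 \<le> m \<and> m \<le> c k}"
      obtain k p where kp: "x = (k, p)" by (cases x)
      have "c k \<le> a k" using \<open>c \<le> a\<close> by (simp add: le_fun_def)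
      then show "x \<in> {(k, m). k < n \<and> 1 \<le> m \<and> m \<le> a k + 1}" using x kp by auto
    qed
  qed
  have QV: "Q a b \<subseteq> ?V" if "b \<in> mingens ?D" for b
  proof -
    have "b \<le> a" using mingens_alex_le[OF that] .
    show ?thesis unfolding Q_def bmvars_def
    proof (rule subsetI)
      fix x assume x: "x \<in> {(k, m). k < n \<and> a k + 2 \<le> m + b k \<and> m \<le> a k + 1}"
      obtain k p where kp: "x = (k, p)" by (cases x)
      have "b k \<le> a k" using \<open>b \<le> a\<close> by (simp add: le_fun_def)
      then show "x \<in> {(k, m). k < n \<and> 1 \<le> m \<and> m \<le> a k + 1}" using x kp by auto
    qed
  qed
  have RV: "R a l \<subseteq> ?V" if "l < n" for l
    using that unfolding R_def bmvars_def by auto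
  have GV: "G \<subseteq> monoms ?V" unfolding G_def
  proof (intro Un_least subsetI)
    fix x assume "x \<in> {sqmon (P b) |b. b \<in> mingens I}"
    then obtain b where "b \<in> mingens I" "x = sqmon (P b)" by blast
    then show "x \<in> monoms ?V" using PV sqm by simp
  next
    fix x assume "x \<in> {sqmon (Q a b) |b. b \<in> mingens ?D}"
    then obtain b where "b \<in> mingens ?D" "x = sqmon (Q a b)" by blast
    then show "x \<in> monoms ?V" using QV sqm by simp
  next
    fix x assume "x \<in> {sqmon (R a l0) |l0. l0 < n}"
    then obtain l where "l < n" "x = sqmon (R a l)" by blast
    then show "x \<in> monoms ?V" using RV sqm by simp
  qed
  have RHS: "Infl ?V (i, j) (BM n a I) = ideal_gen ?V2 (infl (i,j) ` G)"
    unfolding BM by (rule Infl_gen[OF bmvars_finite GV])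
  show "rename (sig i j) ?V1 ?V2 (BM n ?a' ?I') = Infl ?V (i, j) (BM n a I)"
  proof (rule set_eqI)
    fix m :: "(nat \<times> nat) option \<Rightarrow> nat"
    define m\<sigma> where "m\<sigma> = (\<lambda>v. if v \<in> ?V1 then m (sig i j v) else 0)"
    have m\<sigma>m: "m\<sigma> \<in> monoms ?V1" unfolding m\<sigma>_def monoms_def by auto
    have L: "m \<in> rename (sig i j) ?V1 ?V2 (BM n ?a' ?I') \<longleftrightarrow> m \<in> monoms ?V2 \<and> (\<exists>g\<in>G'. g \<le> m\<sigma>)"
      proof -
      have "m \<in> rename (sig i j) ?V1 ?V2 (BM n ?a' ?I') \<longleftrightarrow> m \<in> monoms ?V2 \<and> m\<sigma> \<in> BM n ?a' ?I'"
        unfolding rename_def m\<sigma>_def mem_Collect_eq ..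
      also have "\<dots> \<longleftrightarrow> m \<in> monoms ?V2 \<and> (\<exists>g\<in>G'. g \<le> m\<sigma>)"
        unfolding BM' ideal_gen_def using m\<sigma>m by blast
      finally show ?thesis .
    qed
    have R: "m \<in> Infl ?V (i, j) (BM n a I) \<longleftrightarrow> m \<in> monoms ?V2 \<and> (\<exists>h\<in>G. infl (i,j) h \<le> m)"
      by (simp add: RHS ideal_gen_def)
    have e1: "sqmon (P (tau i j c)) \<le> m\<sigma> \<longleftrightarrow> infl (i,j) (sqmon (P c)) \<le> m" if "c \<in> mingens I" for c
      unfolding m\<sigma>_def
      by (rule gen_corr[of i n j a, OF assms(5,7) _ PV[OF that]]) (unfold P_def, intro allI P_corr[OF assms(6)])
    have e2: "sqmon (Q ?a' (tau i ?m0 b)) \<le> m\<sigma> \<longleftrightarrow> infl (i,j) (sqmon (Q a b)) \<le> m" if "b \<in> mingens ?D" for b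
      unfolding m\<sigma>_def
      by (rule gen_corr[of i n j a, OF assms(5,7) _ QV[OF that]]) (unfold Q_def, intro allI Q_corr[of j a i, OF assms(6,7)])
    have e3: "sqmon (R ?a' l) \<le> m\<sigma> \<longleftrightarrow> infl (i,j) (sqmon (R a l)) \<le> m" if "l < n" for l
      unfolding m\<sigma>_def
      by (rule gen_corr[of i n j a, OF assms(5,7) _ RV[OF that]]) (unfold R_def, intro allI R_corr[of j a i, OF assms(6,7)])
    have g1: "(\<exists>g\<in>G'. g \<le> m\<sigma>) \<longleftrightarrow> (\<exists>c\<in>mingens I. sqmon (P (tau i j c)) \<le> m\<sigma>)
       \<or> (\<exists>b\<in>mingens ?D. sqmon (Q ?a' (tau i ?m0 b)) \<le> m\<sigma>) \<or> (\<exists>l\<in>{..<n}. sqmon (R ?a' l) \<le> m\<sigma>)"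
      unfolding G'_def mgI' mgD' by blast
    have g2: "(\<exists>h\<in>G. infl (i,j) h \<le> m) \<longleftrightarrow> (\<exists>c\<in>mingens I. infl (i,j) (sqmon (P c)) \<le> m)
       \<or> (\<exists>b\<in>mingens ?D. infl (i,j) (sqmon (Q a b)) \<le> m) \<or> (\<exists>l\<in>{..<n}. infl (i,j) (sqmon (R a l)) \<le> m)"
      unfolding G_def by blast
    have h1: "(\<exists>c\<in>mingens I. sqmon (P (tau i j c)) \<le> m\<sigma>) \<longleftrightarrow> (\<exists>c\<in>mingens I. infl (i,j) (sqmon (P c)) \<le> m)"
      by (rule bex_cong[OF refl e1])
    have h2: "(\<exists>b\<in>mingens ?D. sqmon (Q ?a' (tau i ?m0 b)) \<le> m\<sigma>) \<longleftrightarrow> (\<exists>b\<in>mingens ?D. infl (i,j) (sqmon (Q a b)) \<le> m)"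
      by (rule bex_cong[OF refl e2])
    have h3: "(\<exists>l\<in>{..<n}. sqmon (R ?a' l) \<le> m\<sigma>) \<longleftrightarrow> (\<exists>l\<in>{..<n}. infl (i,j) (sqmon (R a l)) \<le> m)"
      by (rule bex_cong[OF refl e3]) simp
    have "(\<exists>g\<in>G'. g \<le> m\<sigma>) \<longleftrightarrow> (\<exists>h\<in>G. infl (i,j) h \<le> m)"
      unfolding g1 g2 h1 h2 h3 ..
    then show "m \<in> rename (sig i j) ?V1 ?V2 (BM n ?a' ?I') \<longleftrightarrow> m \<in> Infl ?V (i, j) (BM n a I)"
      unfolding L R by (rule conj_cong[OF refl])
  qed
qed


end
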